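(* Let $\chi,b,\nu,\mu>0$, $c\in\mathbb{R}$, $r$ as in the context, and assume $b>2\chi\mu$ and $c>\frac{\chi\mu r^*}{2\sqrt{\nu}(b-\chi\mu)}-2\sqrt{\frac{r^*(b-2\chi\mu)}{b-\chi\mu}}$. Let $u\in\mathcal{E}_1$, and suppose $U_{1*}(\cdot;u)\in\mathcal{E}_1$ is also a solution of $$0=U_{xx}+(c-\chi\Psi_x(x;u))U_x+(r(x)-\chi\nu\Psi(x;u)-(b-\chi\mu)U)U,\quad x\in\mathbb{R}.$$ Then $\lim_{x\to\infty}\frac{U_{1*}(x;u)}{U_1^*(x;u)}=1$.
   Context: $r$ is globally Hölder continuous and bounded, with finite limits $r(\pm\infty)$, $r(-\infty)<0<r(\infty)$, $r(-\infty)\le r(x)\le r(\infty)$; $r^*=\sup r=r(\infty)$. $C^b_{\rm unif}(\mathbb{R})$: bounded uniformly continuous functions; $\Psi(x;u)=\frac{\mu}{2\sqrt\nu}\int_{\mathbb{R}}e^{-\sqrt\nu|x-y|}u(y)dy$; $\mathcal{A}_u(U)=U_{xx}+(c-\chi\Psi_x(x;u))U_x+(r(x)-\chi\nu\Psi(x;u)-(b-\chi\mu)U)U$. Fix $r_1\in(r(-\infty),0)$, $x_1$ with $r(x)\le r_1$ for $x\le x_1$, $\theta_1$ the positive root of $\theta^2+c\theta+r_1=0$, and $U_1^+(x)=\min\{\frac{r^*}{b-\chi\mu},\frac{r^*}{b-\chi\mu}e^{\theta_1(x-x_1)}\}$. For $\varepsilon>0$ let $f_\varepsilon(u)=u(r^*-\varepsilon-\frac{\chi\mu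 r^*}{b-\chi\mu}-(b-\chi\mu)u)$ for $u\ge0$, $f_\varepsilon=0$ on $[-\varepsilon,0)$; let $(\phi_\varepsilon,\tilde c_\varepsilon)$ be a decreasing traveling wave: $\phi_\varepsilon''+\tilde c_\varepsilon\phi_\varepsilon'+f_\varepsilon(\phi_\varepsilon)=0$, $\phi_\varepsilon(-\infty)=\frac{(r^*-\varepsilon)(b-\chi\mu)-\chi\mu r^*}{(b-\chi\mu)^2}$, $\phi_\varepsilon(\infty)=-\varepsilon$ (such waves exist with $\tilde c_\varepsilon\to2\sqrt{r^*(b-2\chi\mu)/(b-\chi\mu)}$ as $\varepsilon\to0^+$). With $\delta:=c-\frac{\chi\mu r^*}{2\sqrt\nu(b-\chi\mu)}+2\sqrt{\frac{r^*(b-2\chi\mu)}{b-\chi\mu}}>0$, fix $\varepsilon\in\big(0,\frac{r^*(b-2\chi\mu)}{b-\chi\mu}\big)$ with $\tilde c_\varepsilon>2\sqrt{\frac{r^*(b-2\chi\mu)}{b-\chi\mu}}-\frac\delta2$. Let $\psi_\varepsilon(x)=\phi_\varepsilon(-x)$, translated so that $\psi_\varepsilon(x_0)=0$ for some $x_0>x_1$ with $r(x)\ge r^*-\varepsilon$ for $x>x_0$. $U_1^-=\max\{\psi_\varepsilon,0\}$, $\mathcal{E}_1=\{u\in C^b_{\rm unif}(\mathbb{R}):U_1^-\le u\le U_1^+\}$. For $u\in\mathcal{E}_1$, $U_1^*(x;u)=\lim_{t\to\infty}U(t,x;u)$ where $U(t,x;u)$ solves $U_t=\mathcal{A}_u(U)$,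 $U(0,\cdot;u)=U_1^+$ (this limit exists, lies in $\mathcal{E}_1$ and solves the displayed elliptic equation). *)

theory Defs
  imports "HOL-Analysis.Analysis"
begin

definition holder_cont :: "(real \<Rightarrow> real) \<Rightarrow> bool" where
  "holder_cont f \<longleftrightarrow> (\<exists>\<alpha> L. 0 < \<alpha> \<and> \<alpha> \<le> 1 \<and> 0 \<le> L \<and>
      (\<forall>x y. \<bar>f x - f y\<bar> \<le> L * \<bar>x - y\<bar> powr \<alpha>))"

definition Cb_unif :: "(real \<Rightarrow> real) set" where
  "Cb_unif = {u. bounded (range u) \<and> uniformly_continuous_on UNIV u}"

definition Psi :: "real \<Rightarrow> real \<Rightarrow> (real \<Rightarrow> real) \<Rightarrow> real \<Rightarrow> real" where
  "Psi \<mu> \<nu> u x = \<mu> / (2 * sqrt \<nu>) * (LINT y|lborel. exp (- sqrt \<nu> * \<bar>x - y\<bar>) * u y)"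

definition Psi_x :: "real \<Rightarrow> real \<Rightarrow> (real \<Rightarrow> real) \<Rightarrow> real \<Rightarrow> real" where
  "Psi_x \<mu> \<nu> u x = deriv (Psi \<mu> \<nu> u) x"

definition elliptic_sol ::
  "real \<Rightarrow> real \<Rightarrow> real \<Rightarrow> real \<Rightarrow> real \<Rightarrow> (real \<Rightarrow> real) \<Rightarrow> (real \<Rightarrow> real)
     \<Rightarrow> (real \<Rightarrow> real) \<Rightarrow> bool" where
  "elliptic_sol chi b \<nu> \<mu> c r u W \<longleftrightarrow>
     (\<exists>W' W''. \<forall>x. (W has_real_derivative W' x) (at x) \<and>
        (W' has_real_derivative W'' x) (at x) \<and>
        W'' x + (c - chi * Psi_x \<mu> \<nu> u x) * W' x
          + (r x - chi * \<nu> * Psi \<mu> \<nu> u x - (b - chi * \<mu>) * W x) * W x = 0)"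

definition parabolic_sol ::
  "real \<Rightarrow> real \<Rightarrow> real \<Rightarrow> real \<Rightarrow> real \<Rightarrow> (real \<Rightarrow> real) \<Rightarrow> (real \<Rightarrow> real)
     \<Rightarrow> (real \<Rightarrow> real) \<Rightarrow> (real \<Rightarrow> real \<Rightarrow> real) \<Rightarrow> bool" where
  "parabolic_sol chi b \<nu> \<mu> c r u U0 U \<longleftrightarrow>
     continuous_on ({0..} \<times> UNIV) (\<lambda>(t, x). U t x) \<and>
     bounded ((\<lambda>(t, x). U t x) ` ({0..} \<times> UNIV)) \<and>
     (\<forall>x. U 0 x = U0 x) \<and>
     (\<exists>Ut Ux Uxx. \<forall>t>0. \<forall>x.
        ((\<lambda>s. U s x) has_real_derivative Ut t x) (at t) \<and>
        ((\<lambda>y. U t y) has_real_derivative Ux t x) (at x) \<and>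
        ((\<lambda>y. Ux t y) has_real_derivative Uxx t x) (at x) \<and>
        Ut t x = Uxx t x + (c - chi * Psi_x \<mu> \<nu> u x) * Ux t x
          + (r x - chi * \<nu> * Psi \<mu> \<nu> u x - (b - chi * \<mu>) * U t x) * U t x)"

text \<open>f_eps(u) (only used for u >= -eps).\<close>
definition f_eps :: "real \<Rightarrow> real \<Rightarrow> real \<Rightarrow> real \<Rightarrow> real \<Rightarrow> real \<Rightarrow> real" where
  "f_eps chi b \<mu> rstar \<epsilon> v =
     (if 0 \<le> v then v * (rstar - \<epsilon> - chi * \<mu> * rstar / (b - chi * \<mu>) - (b - chi * \<mu>) * v)
      else 0)"

end

theory Submission
  imports Defs
begin

lemma ftc_at:
  fixes f :: "real \<Rightarrow> real"
  assumes cf: "continuous_on UNIV f"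
  shows "((\<lambda>t. LBINT y=ereal x..ereal t. f y) has_real_derivative f x) (at x)"
proof -
  have c: "continuous_on {x-1..x+1} f" using cf by (rule continuous_on_subset) simp
  have "((\<lambda>t. LBINT y=ereal x..ereal t. f y) has_vector_derivative f x) (at x within {x-1..x+1})"
    using interval_integral_FTC2[of "x-1" x "x+1" f x, OF _ _ c] by simp
  then have "((\<lambda>t. LBINT y=ereal x..ereal t. f y) has_vector_derivative f x) (at x within {x-1<..<x+1})"
    by (rule has_vector_derivative_within_subset) (simp add: subset_iff)
  then have "((\<lambda>t. LBINT y=ereal x..ereal t. f y) has_vector_derivative f x) (at x)"
    by (rule has_vector_derivative_within_open[THEN iffD1, rotated 2]) auto
  then show ?thesis
    by (simp add: has_real_derivative_iff_has_vector_derivative)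
qed

lemma exp_int_left:
  fixes s x :: real assumes s: "s > 0"
  shows "set_integrable lborel (einterval (-\<infinity>) (ereal x)) (\<lambda>y. exp (s*y))"
    "(LBINT y=-\<infinity>..ereal x. exp (s*y)) = exp (s*x) / s"
proof -
  have D: "\<And>y. ((\<lambda>y. exp (s*y)/s) has_real_derivative exp (s*y)) (at y)"
    using s by (auto intro!: derivative_eq_intros)
  have A: "(((\<lambda>y. exp (s*y)/s) \<circ> real_of_ereal) \<longlongrightarrow> 0) (at_right (-\<infinity>))"
  proof -
    have "filterlim (\<lambda>y. s*y) at_bot at_bot"
      using s by (intro filterlim_tendsto_pos_mult_at_bot[OF tendsto_const] filterlim_ident)
    then have "((\<lambda>y. exp (s*y)) \<longlongrightarrow> 0) at_bot" by (rule filterlim_compose[OF exp_at_bot])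
    from tendsto_divide[OF this tendsto_const, of s] show ?thesis unfolding ereal_tendsto_simps using s by (simp add: o_def)
  qed
  have B: "(((\<lambda>y. exp (s*y)/s) \<circ> real_of_ereal) \<longlongrightarrow> exp (s*x)/s) (at_left (ereal x))"
    unfolding ereal_tendsto_simps
    using s by (auto intro!: tendsto_eq_intros)
  note R = interval_integral_FTC_nonneg[where a="-\<infinity>" and b="ereal x" and F="\<lambda>y. exp (s*y)/s" and f="\<lambda>y. exp (s*y)", OF _ D _ _ A B]
  show "set_integrable lborel (einterval (-\<infinity>) (ereal x)) (\<lambda>y. exp (s*y))"
    "(LBINT y=-\<infinity>..ereal x. exp (s*y)) = exp (s*x) / s"
    using R s by auto
qed

lemma exp_int_right:
  fixes s x :: real assumes s: "s > 0"
  shows "set_integrable lborel (einterval (ereal x) \<infinity>) (\<lambda>y. exp (-s*y))"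
    "(LBINT y=ereal x..\<infinity>. exp (-s*y)) = exp (-s*x) / s"
proof -
  have D: "\<And>y. ((\<lambda>y. - exp (-s*y)/s) has_real_derivative exp (-s*y)) (at y)"
    using s by (auto intro!: derivative_eq_intros)
  have B: "(((\<lambda>y. - exp (-s*y)/s) \<circ> real_of_ereal) \<longlongrightarrow> 0) (at_left \<infinity>)"
  proof -
    have "filterlim (\<lambda>y. -s*y) at_bot at_top"
      using s by (intro filterlim_tendsto_neg_mult_at_bot[OF tendsto_const] filterlim_ident) auto
    then have "((\<lambda>y. exp (-s*y)) \<longlongrightarrow> 0) at_top" by (rule filterlim_compose[OF exp_at_bot])
    from tendsto_minus[OF tendsto_divide[OF this tendsto_const, of s]] show ?thesis unfolding ereal_tendsto_simps using s by (simp add: o_def)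
  qed
  have A: "(((\<lambda>y. - exp (-s*y)/s) \<circ> real_of_ereal) \<longlongrightarrow> - exp (-s*x)/s) (at_right (ereal x))"
    unfolding ereal_tendsto_simps
    using s by (auto intro!: tendsto_eq_intros)
  note R = interval_integral_FTC_nonneg[where b="\<infinity>" and a="ereal x" and F="\<lambda>y. - exp (-s*y)/s" and f="\<lambda>y. exp (-s*y)", OF _ D _ _ A B]
  show "set_integrable lborel (einterval (ereal x) \<infinity>) (\<lambda>y. exp (-s*y))"
    "(LBINT y=ereal x..\<infinity>. exp (-s*y)) = exp (-s*x) / s"
    using R s by auto
qed

lemma bd_mult:
  fixes v M a :: real assumes "\<bar>v\<bar> \<le> M" "a \<ge> 0"
  shows "- (M * a) \<le> a * v" "a * v \<le> M * a" "- (M * a) \<le> v * a" "v * a \<le> M * a"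
proof -
  have "a * (- M) \<le> a * v" using assms by (intro mult_left_mono) auto
  moreover have "a * v \<le> a * M" using assms by (intro mult_left_mono) auto
  ultimately show "- (M * a) \<le> a * v" "a * v \<le> M * a" "- (M * a) \<le> v * a" "v * a \<le> M * a"
    by (simp_all add: mult.commute)
qed

lemma expL: fixes s x y :: real assumes "y < x"
  shows "exp (- s * \<bar>x - y\<bar>) = exp (- s * x) * exp (s * y)"
proof -
  have "exp (- s * \<bar>x - y\<bar>) = exp (- s * x + s * y)"
    by (rule arg_cong[where f=exp]) (use assms in \<open>simp add: algebra_simps\<close>)
  also have "\<dots> = exp (- s * x) * exp (s * y)" by (rule exp_add)
  finally show ?thesis .
qed

lemma expR: fixes s x y :: real assumes "x < y"
  shows "exp (- s * \<bar>x - y\<bar>) = exp (s * x) * exp (- s * y)"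
proof -
  have "exp (- s * \<bar>x - y\<bar>) = exp (s * x + - s * y)"
    by (rule arg_cong[where f=exp]) (use assms in \<open>simp add: algebra_simps\<close>)
  also have "\<dots> = exp (s * x) * exp (- s * y)" by (rule exp_add)
  finally show ?thesis .
qed

lemma psi_props:
  fixes u :: "real \<Rightarrow> real" and \<mu> \<nu> M :: real
  assumes \<nu>: "\<nu> > 0" and uc: "continuous_on UNIV u" and ub: "\<And>y. \<bar>u y\<bar> \<le> M"
  shows "\<exists>P'. (\<forall>x. (Psi \<mu> \<nu> u has_real_derivative P' x) (at x)) \<and>
     (\<forall>x. \<bar>P' x\<bar> \<le> \<bar>\<mu>\<bar> * M / sqrt \<nu>) \<and> (\<forall>x. \<bar>Psi \<mu> \<nu> u x\<bar> \<le> \<bar>\<mu>\<bar> * M / \<nu>)"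
proof -
  define s where "s = sqrt \<nu>"
  have s: "s > 0" using \<nu> by (simp add: s_def)
  have M0: "M \<ge> 0" using ub[of 0] by linarith
  define f1 where "f1 y = exp (s*y) * u y" for y
  define f2 where "f2 y = exp (-s*y) * u y" for y
  have um: "u \<in> borel_measurable borel" by (rule borel_measurable_continuous_onI[OF uc])
  have f1m: "f1 \<in> borel_measurable borel" unfolding f1_def using um by measurable
  have f2m: "f2 \<in> borel_measurable borel" unfolding f2_def using um by measurable
  have cf1: "continuous_on A f1" for A unfolding f1_def
    by (intro continuous_intros continuous_on_subset[OF uc]) auto
  have cf2: "continuous_on A f2" for A unfolding f2_def
    by (intro continuous_intros continuous_on_subset[OF uc]) auto
  have int1: "set_integrable lborel (einterval (-\<infinity>) (ereal x)) f1" for x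
  proof (rule set_integrable_bound)
    show "set_integrable lborel (einterval (-\<infinity>) (ereal x)) (\<lambda>y. M * exp (s*y))"
      using exp_int_left(1)[OF s] by simp
    show "set_borel_measurable lborel (einterval (- \<infinity>) (ereal x)) f1"
      unfolding set_borel_measurable_def using f1m by measurable
    show "AE y in lborel. y \<in> einterval (- \<infinity>) (ereal x) \<longrightarrow> norm (f1 y) \<le> norm (M * exp (s * y))"
      using ub M0 by (auto simp: f1_def abs_mult intro!: mult_left_mono)
  qed
  have int2: "set_integrable lborel (einterval (ereal x) \<infinity>) f2" for x
  proof (rule set_integrable_bound)
    show "set_integrable lborel (einterval (ereal x) \<infinity>) (\<lambda>y. M * exp (-s*y))"
      using exp_int_right(1)[OF s] by simp
    show "set_borel_measurable lborel (einterval (ereal x) \<infinity>) f2"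
      unfolding set_borel_measurable_def using f2m by measurable
    show "AE y in lborel. y \<in> einterval (ereal x) \<infinity> \<longrightarrow> norm (f2 y) \<le> norm (M * exp (-s * y))"
      using ub M0 by (auto simp: f2_def abs_mult intro!: mult_left_mono)
  qed
  define E1 where "E1 x = (LBINT y=-\<infinity>..ereal x. f1 y)" for x
  define E2 where "E2 x = (LBINT y=ereal x..\<infinity>. f2 y)" for x
  have bd1: "\<bar>exp (-s*x) * E1 x\<bar> \<le> M / s" for x
  proof -
    have e: "E1 x = (LINT y:einterval (-\<infinity>) (ereal x)|lborel. f1 y)"
      by (simp add: E1_def interval_lebesgue_integral_def)
    have ee: "(LINT y:einterval (-\<infinity>) (ereal x)|lborel. exp (s*y)) = exp (s*x)/s"
      using exp_int_left(2)[OF s, of x] by (simp add: interval_lebesgue_integral_def)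
    have "E1 x \<le> (LINT y:einterval (-\<infinity>) (ereal x)|lborel. M * exp (s*y))"
      unfolding e using bd_mult[OF ub]
      by (intro set_integral_mono int1 set_integrable_mult_right exp_int_left(1)[OF s])
         (auto simp: f1_def)
    moreover have "- E1 x \<le> (LINT y:einterval (-\<infinity>) (ereal x)|lborel. M * exp (s*y))"
    proof -
      have "(LINT y:einterval (-\<infinity>) (ereal x)|lborel. (-M) * exp (s*y)) \<le> E1 x"
        unfolding e using bd_mult[OF ub]
        by (intro set_integral_mono int1 set_integrable_mult_right exp_int_left(1)[OF s])
           (auto simp: f1_def)
      moreover have "(LINT y:einterval (-\<infinity>) (ereal x)|lborel. (-M) * exp (s*y)) = (-M) * (LINT y:einterval (-\<infinity>) (ereal x)|lborel. exp (s*y))"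
        by (rule set_integral_mult_right)
      moreover have "(LINT y:einterval (-\<infinity>) (ereal x)|lborel. M * exp (s*y)) = M * (LINT y:einterval (-\<infinity>) (ereal x)|lborel. exp (s*y))"
        by (rule set_integral_mult_right)
      ultimately show ?thesis by linarith
    qed
    ultimately have "\<bar>E1 x\<bar> \<le> M * (exp (s*x) / s)" using ee by simp
    then have "exp (-s*x) * \<bar>E1 x\<bar> \<le> exp (-s*x) * (M * (exp (s*x) / s))"
      by (intro mult_left_mono) auto
    also have "\<dots> = M / s" by (simp add: exp_minus field_simps)
    finally show ?thesis by (simp add: abs_mult)
  qed
  have bd2: "\<bar>exp (s*x) * E2 x\<bar> \<le> M / s" for x
  proof -
    have e: "E2 x = (LINT y:einterval (ereal x) \<infinity>|lborel. f2 y)"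
      by (simp add: E2_def interval_lebesgue_integral_def)
    have ee: "(LINT y:einterval (ereal x) \<infinity>|lborel. exp (-s*y)) = exp (-s*x)/s"
      using exp_int_right(2)[OF s, of x] by (simp add: interval_lebesgue_integral_def)
    have "E2 x \<le> (LINT y:einterval (ereal x) \<infinity>|lborel. M * exp (-s*y))"
      unfolding e using bd_mult[OF ub]
      by (intro set_integral_mono int2 set_integrable_mult_right exp_int_right(1)[OF s])
         (auto simp: f2_def)
    moreover have "- E2 x \<le> (LINT y:einterval (ereal x) \<infinity>|lborel. M * exp (-s*y))"
    proof -
      have "(LINT y:einterval (ereal x) \<infinity>|lborel. (-M) * exp (-s*y)) \<le> E2 x"
        unfolding e using bd_mult[OF ub]
        by (intro set_integral_mono int2 set_integrable_mult_right exp_int_right(1)[OF s])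
           (auto simp: f2_def)
      moreover have "(LINT y:einterval (ereal x) \<infinity>|lborel. (-M) * exp (-s*y)) = (-M) * (LINT y:einterval (ereal x) \<infinity>|lborel. exp (-s*y))"
        by (rule set_integral_mult_right)
      moreover have "(LINT y:einterval (ereal x) \<infinity>|lborel. M * exp (-s*y)) = M * (LINT y:einterval (ereal x) \<infinity>|lborel. exp (-s*y))"
        by (rule set_integral_mult_right)
      ultimately show ?thesis by linarith
    qed
    ultimately have "\<bar>E2 x\<bar> \<le> M * (exp (-s*x) / s)" using ee by simp
    then have "exp (s*x) * \<bar>E2 x\<bar> \<le> exp (s*x) * (M * (exp (-s*x) / s))"
      by (intro mult_left_mono) auto
    also have "\<dots> = M / s" by (simp add: exp_minus field_simps)
    finally show ?thesis by (simp add: abs_mult)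
  qed
  have D1: "(E1 has_real_derivative f1 x) (at x)" for x
  proof -
    have eq: "E1 t = E1 x + (LBINT y=ereal x..ereal t. f1 y)" for t
    proof -
      have "interval_lebesgue_integrable lborel (min (-\<infinity>) (min (ereal x) (ereal t))) (max (-\<infinity>) (max (ereal x) (ereal t))) f1"
        using int1[of "max x t"] by (cases "x \<le> t") (simp_all add: interval_lebesgue_integrable_def max_def)
      from interval_integral_sum[OF this] show ?thesis by (simp add: E1_def)
    qed
    from DERIV_add[OF DERIV_const ftc_at[OF cf1]]
    have "((\<lambda>t. E1 x + (LBINT y=ereal x..ereal t. f1 y)) has_real_derivative f1 x) (at x)" by simp
    moreover have "(\<lambda>t. E1 x + (LBINT y=ereal x..ereal t. f1 y)) = E1" by (rule ext) (rule eq[symmetric])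
    ultimately show ?thesis by simp
  qed
  have D2: "(E2 has_real_derivative - f2 x) (at x)" for x
  proof -
    have eq: "E2 t = E2 x - (LBINT y=ereal x..ereal t. f2 y)" for t
    proof -
      have "interval_lebesgue_integrable lborel (min (ereal t) (min (ereal x) \<infinity>)) (max (ereal t) (max (ereal x) \<infinity>)) f2"
        using int2[of "min x t"] by (cases "x \<le> t") (simp_all add: interval_lebesgue_integrable_def min_def)
      from interval_integral_sum[OF this] show ?thesis
        by (simp add: E2_def interval_integral_endpoints_reverse[of "ereal t"])
    qed
    from DERIV_diff[OF DERIV_const ftc_at[OF cf2]]
    have "((\<lambda>t. E2 x - (LBINT y=ereal x..ereal t. f2 y)) has_real_derivative - f2 x) (at x)" by simp
    moreover have "(\<lambda>t. E2 x - (LBINT y=ereal x..ereal t. f2 y)) = E2" by (rule ext) (rule eq[symmetric])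
    ultimately show ?thesis by simp
  qed
  have form: "Psi \<mu> \<nu> u x = \<mu> / (2 * s) * (exp (-s*x) * E1 x + exp (s*x) * E2 x)" for x
  proof -
    define g where "g y = exp (- s * \<bar>x - y\<bar>) * u y" for y
    have gL: "g y = exp (-s*x) * f1 y" if "y < x" for y
      unfolding g_def f1_def using expL[OF that, of s] by (simp add: mult.assoc)
    have gR: "g y = exp (s*x) * f2 y" if "x < y" for y
      unfolding g_def f2_def using expR[OF that, of s] by (simp add: mult.assoc)
    have gc: "continuous_on A g" for A unfolding g_def
      by (intro continuous_intros continuous_on_subset[OF uc]) auto
    have g1: "set_integrable lborel (einterval (-\<infinity>) (ereal x)) g"
    proof -
      have "set_integrable lborel (einterval (-\<infinity>) (ereal x)) (\<lambda>y. exp (-s*x) * f1 y)"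
        using int1[of x] by simp
      then show ?thesis
        by (rule set_integrable_cong[THEN iffD1, rotated -1]) (auto simp: gL)
    qed
    have g2: "set_integrable lborel (einterval (ereal x) \<infinity>) g"
    proof -
      have "set_integrable lborel (einterval (ereal x) \<infinity>) (\<lambda>y. exp (s*x) * f2 y)"
        using int2[of x] by simp
      then show ?thesis
        by (rule set_integrable_cong[THEN iffD1, rotated -1]) (auto simp: gR)
    qed
    have g3: "set_integrable lborel {x..x} g" by (rule borel_integrable_atLeastAtMost'[OF gc])
    have "set_integrable lborel ({..<x} \<union> {x<..} \<union> {x..x}) g"
      using g1 g2 g3 by (intro set_integrable_Un) auto
    moreover have "{..<x} \<union> {x<..} \<union> {x..x} = UNIV" by auto
    ultimately have gi: "set_integrable lborel UNIV g" by simp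
    have "(LBINT y=-\<infinity>..ereal x. g y) + (LBINT y=ereal x..\<infinity>. g y) = (LBINT y=-\<infinity>..\<infinity>. g y)"
      using gi by (intro interval_integral_sum) (simp add: interval_lebesgue_integrable_def)
    moreover have "(LBINT y=-\<infinity>..\<infinity>. g y) = (LINT y|lborel. g y)"
      by (simp add: interval_lebesgue_integral_def set_lebesgue_integral_def)
    moreover have "(LBINT y=-\<infinity>..ereal x. g y) = (LBINT y=-\<infinity>..ereal x. exp (-s*x) * f1 y)"
      by (rule interval_lebesgue_integral_cong) (auto simp: gL)
    moreover have "(LBINT y=ereal x..\<infinity>. g y) = (LBINT y=ereal x..\<infinity>. exp (s*x) * f2 y)"
      by (rule interval_lebesgue_integral_cong) (auto simp: gR)
    ultimately have "(LINT y|lborel. g y) = exp (-s*x) * E1 x + exp (s*x) * E2 x"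
      by (simp add: E1_def E2_def)
    then show ?thesis by (simp add: Psi_def g_def s_def)
  qed
  define P' where "P' x = \<mu> / 2 * (exp (s*x) * E2 x - exp (-s*x) * E1 x)" for x
  have DP: "(Psi \<mu> \<nu> u has_real_derivative P' x) (at x)" for x
  proof -
    have "((\<lambda>x. \<mu> / (2 * s) * (exp (-s*x) * E1 x + exp (s*x) * E2 x)) has_real_derivative
       \<mu> / (2 * s) * ((- s * exp (-s*x)) * E1 x + exp (-s*x) * f1 x + (s * exp (s*x) * E2 x + exp (s*x) * (- f2 x)))) (at x)"
    proof -
      have de1: "((\<lambda>x. exp (-s*x)) has_real_derivative (-s * exp (-s*x))) (at x)"
        by (auto intro!: derivative_eq_intros)
      have de2: "((\<lambda>x. exp (s*x)) has_real_derivative (s * exp (s*x))) (at x)"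
        by (auto intro!: derivative_eq_intros)
      show ?thesis
        using DERIV_cmult[OF DERIV_add[OF DERIV_mult[OF de1 D1] DERIV_mult[OF de2 D2]], of "\<mu> / (2 * s)"]
        by (simp add: mult.commute)
    qed
    moreover have "\<mu> / (2 * s) * ((- s * exp (-s*x)) * E1 x + exp (-s*x) * f1 x + (s * exp (s*x) * E2 x + exp (s*x) * (- f2 x))) = P' x"
    proof -
      have e: "exp (-s*x) * exp (s*x) = 1" by (simp add: exp_add[symmetric])
      have c1: "exp (-s*x) * f1 x = u x" unfolding f1_def using e by (metis mult.assoc mult_1)
      have c2: "exp (s*x) * f2 x = u x" unfolding f2_def using e by (metis mult.assoc mult.commute mult_1)
      have "\<mu> / (2 * s) * ((- s * exp (-s*x)) * E1 x + exp (-s*x) * f1 x + (s * exp (s*x) * E2 x + exp (s*x) * (- f2 x)))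
         = \<mu> / (2 * s) * s * (exp (s*x) * E2 x - exp (-s*x) * E1 x) + \<mu> / (2 * s) * (exp (-s*x) * f1 x - exp (s*x) * f2 x)"
        by (simp add: algebra_simps)
      also have "\<dots> = P' x" using s unfolding c1 c2 by (simp add: P'_def)
      finally show ?thesis .
    qed
    moreover have "(\<lambda>x. \<mu> / (2 * s) * (exp (-s*x) * E1 x + exp (s*x) * E2 x)) = Psi \<mu> \<nu> u"
      using form by auto
    ultimately show ?thesis by simp
  qed
  have BP: "\<bar>P' x\<bar> \<le> \<bar>\<mu>\<bar> * M / sqrt \<nu>" for x
  proof -
    have "\<bar>exp (s*x) * E2 x - exp (-s*x) * E1 x\<bar> \<le> 2 * M / s" using bd1[of x] bd2[of x] by linarith
    then have "\<bar>\<mu>\<bar> / 2 * \<bar>exp (s*x) * E2 x - exp (-s*x) * E1 x\<bar> \<le> \<bar>\<mu>\<bar> / 2 * (2 * M / s)"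
      by (intro mult_left_mono) auto
    then show ?thesis by (simp add: P'_def abs_mult s_def)
  qed
  have BPsi: "\<bar>Psi \<mu> \<nu> u x\<bar> \<le> \<bar>\<mu>\<bar> * M / \<nu>" for x
  proof -
    have "\<bar>exp (-s*x) * E1 x + exp (s*x) * E2 x\<bar> \<le> 2 * M / s" using bd1[of x] bd2[of x] by linarith
    then have "\<bar>\<mu>\<bar> / (2 * s) * \<bar>exp (-s*x) * E1 x + exp (s*x) * E2 x\<bar> \<le> \<bar>\<mu>\<bar> / (2 * s) * (2 * M / s)"
      using s by (intro mult_left_mono) auto
    moreover have "\<bar>\<mu>\<bar> / (2 * s) * (2 * M / s) = \<bar>\<mu>\<bar> * M / \<nu>"
      using s \<nu> by (simp add: s_def field_simps)
    moreover have "\<bar>Psi \<mu> \<nu> u x\<bar> = \<bar>\<mu>\<bar> / (2 * s) * \<bar>exp (-s*x) * E1 x + exp (s*x) * E2 x\<bar>"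
      unfolding form abs_mult using s by simp
    ultimately show ?thesis by linarith
  qed
  show ?thesis using DP BP BPsi by blast
qed

lemma deriv_upper:
  fixes f f1 f2 :: "real \<Rightarrow> real" and A B K :: real
  assumes d1: "\<And>x. (f has_real_derivative f1 x) (at x)"
    and d2: "\<And>x. (f1 has_real_derivative f2 x) (at x)"
    and fb: "\<And>x. \<bar>f x\<bar> \<le> K" and f2b: "\<And>x. \<bar>f2 x\<bar> \<le> A * \<bar>f1 x\<bar> + B"
    and A: "A > 0" and B: "B \<ge> 0"
  shows "f1 x0 \<le> (2 * K + B / A) * exp A"
proof (rule ccontr)
  assume "\<not> ?thesis"
  then have D: "f1 x0 > (2 * K + B / A) * exp A" by simp
  have K: "K \<ge> 0" using fb[of 0] by linarith
  define cs where "cs = (f1 x0 + B / A) * exp (- A) - B / A"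
  have "f1 x0 * exp (- A) > 2 * K + B / A"
    using D by (simp add: exp_minus field_simps)
  moreover have "(B / A) * exp (-A) \<ge> 0" using A B by simp
  ultimately have cs2K: "cs > 2 * K" unfolding cs_def by (simp add: algebra_simps)
  have cont1: "isCont f1 x" for x using d2 by (rule DERIV_isCont)
  have cont0: "isCont f x" for x using d1 by (rule DERIV_isCont)
  have f1x0: "f1 x0 > 0"
  proof -
    have "(2 * K + B / A) * exp A \<ge> 0" using K A B by simp
    then show ?thesis using D by linarith
  qed
  have claimP: "f1 t \<ge> cs" if t: "x0 \<le> t" "t \<le> x0 + 1" and pos: "\<And>s. x0 \<le> s \<Longrightarrow> s \<le> t \<Longrightarrow> f1 s \<ge> 0" for t
  proof -
    define \<phi> where "\<phi> s = (f1 s + B / A) * exp (A * (s - x0))" for s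
    have "\<phi> x0 \<le> \<phi> t"
    proof (rule DERIV_nonneg_imp_nondecreasing[OF t(1)])
      fix s assume s: "x0 \<le> s" "s \<le> t"
      have "(\<phi> has_real_derivative (f2 s * exp (A * (s - x0)) + (f1 s + B / A) * (exp (A * (s - x0)) * A))) (at s)"
        unfolding \<phi>_def by (auto intro!: derivative_eq_intros d2)
      moreover have "f2 s * exp (A * (s - x0)) + (f1 s + B / A) * (exp (A * (s - x0)) * A)
          = (f2 s + A * f1 s + B) * exp (A * (s - x0))"
        using A by (simp add: field_simps)
      moreover have "f2 s + A * f1 s + B \<ge> 0" using f2b[of s] pos[OF s] by (simp add: abs_le_iff)
      ultimately show "\<exists>y. (\<phi> has_real_derivative y) (at s) \<and> 0 \<le> y" by fastforce
    qed
    then have "f1 x0 + B / A \<le> (f1 t + B / A) * exp (A * (t - x0))" by (simp add: \<phi>_def)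
    then have "(f1 x0 + B / A) * exp (- A * (t - x0)) \<le> (f1 t + B / A) * exp (A * (t - x0)) * exp (- A * (t - x0))"
      by (rule mult_right_mono) simp
    also have "\<dots> = f1 t + B / A"
    proof -
      have e: "exp (A * (t - x0)) * exp (- A * (t - x0)) = 1" by (simp add: exp_add[symmetric])
      show ?thesis by (simp only: mult.assoc e mult_1_right)
    qed
    finally have "(f1 x0 + B / A) * exp (- A * (t - x0)) \<le> f1 t + B / A" .
    moreover have "(f1 x0 + B / A) * exp (- A) \<le> (f1 x0 + B / A) * exp (- A * (t - x0))"
    proof (rule mult_left_mono)
      show "exp (- A) \<le> exp (- A * (t - x0))" using A t by simp
      have "B / A \<ge> 0" using A B by simp
      then show "0 \<le> f1 x0 + B / A" using f1x0 by simp
    qed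
    ultimately show ?thesis unfolding cs_def by linarith
  qed
  have allpos: "f1 t > 0" if t: "x0 \<le> t" "t \<le> x0 + 1" for t
  proof (rule ccontr)
    assume nt: "\<not> f1 t > 0"
    define T where "T = {x0..x0+1} \<inter> {s. f1 s \<le> 0}"
    have cf1: "continuous_on UNIV f1" by (intro continuous_at_imp_continuous_on ballI cont1)
    have "closed {s. f1 s \<le> 0}"
      by (rule closed_Collect_le[OF cf1 continuous_on_const])
    then have cT: "compact T" unfolding T_def by (intro compact_Int_closed compact_Icc)
    have "t \<in> T" using t nt unfolding T_def by simp
    then have "T \<noteq> {}" by blast
    from compact_attains_inf[OF cT this] obtain t1 where t1: "t1 \<in> T" "\<And>s. s \<in> T \<Longrightarrow> t1 \<le> s"
      by blast
    have t1a: "x0 \<le> t1" "t1 \<le> x0 + 1" "f1 t1 \<le> 0" using t1(1) unfolding T_def by simp_all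
    have t1x: "x0 < t1" using t1a f1x0 by (cases "t1 = x0") simp_all
    have lt: "f1 s > 0" if s: "x0 \<le> s" "s < t1" for s
    proof (rule ccontr)
      assume "\<not> f1 s > 0"
      then have "s \<in> T" using s t1a unfolding T_def by simp
      then have "t1 \<le> s" by (rule t1(2))
      then show False using s by simp
    qed
    have ge: "f1 s \<ge> cs" if s: "x0 < s" "s < t1" for s
    proof (rule claimP)
      show "x0 \<le> s" "s \<le> x0 + 1" using s t1a by simp_all
      show "f1 r \<ge> 0" if "x0 \<le> r" "r \<le> s" for r using lt[of r] that s by simp
    qed
    have "cs \<le> f1 t1"
    proof (rule tendsto_lowerbound)
      show "(f1 \<longlongrightarrow> f1 t1) (at_left t1)"
        using cont1[of t1] by (simp add: isCont_def filterlim_at_split)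
      show "\<forall>\<^sub>F s in at_left t1. cs \<le> f1 s"
        using eventually_at_left_real[OF t1x] by eventually_elim (simp add: ge)
    qed (simp add: trivial_limit_at_left_real)
    then show False using t1a cs2K K by simp
  qed
  have ge1: "f1 s \<ge> cs" if "x0 \<le> s" "s \<le> x0 + 1" for s
    using claimP[of s] allpos that by force
  obtain \<xi> where \<xi>: "x0 < \<xi>" "\<xi> < x0 + 1" "f (x0 + 1) - f x0 = (x0 + 1 - x0) * f1 \<xi>"
    using MVT2[of x0 "x0 + 1" f f1] d1 by auto
  then have "f (x0 + 1) - f x0 \<ge> cs" using ge1[of \<xi>] by simp
  moreover have "f (x0 + 1) - f x0 \<le> 2 * K" using fb[of x0] fb[of "x0+1"] by (simp add: abs_le_iff)
  ultimately show False using cs2K by linarith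
qed

lemma deriv_bound:
  fixes f f1 f2 :: "real \<Rightarrow> real" and A B K :: real
  assumes d1: "\<And>x. (f has_real_derivative f1 x) (at x)"
    and d2: "\<And>x. (f1 has_real_derivative f2 x) (at x)"
    and fb: "\<And>x. \<bar>f x\<bar> \<le> K" and f2b: "\<And>x. \<bar>f2 x\<bar> \<le> A * \<bar>f1 x\<bar> + B"
    and A: "A > 0" and B: "B \<ge> 0"
  shows "\<bar>f1 x\<bar> \<le> (2 * K + B / A) * exp A"
proof -
  have "f1 x \<le> (2 * K + B / A) * exp A" by (rule deriv_upper[OF d1 d2 fb f2b A B])
  moreover have "- f1 x \<le> (2 * K + B / A) * exp A"
  proof (rule deriv_upper[of "\<lambda>x. - f x" "\<lambda>x. - f1 x" "\<lambda>x. - f2 x"])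
    show "((\<lambda>x. - f x) has_real_derivative - f1 x) (at x)" for x using d1[of x] by (rule DERIV_minus)
    show "((\<lambda>x. - f1 x) has_real_derivative - f2 x) (at x)" for x using d2[of x] by (rule DERIV_minus)
  qed (use fb f2b A B in simp_all)
  ultimately show ?thesis by linarith
qed

lemma left_min_deriv:
  fixes f :: "real \<Rightarrow> real"
  assumes d: "(f has_real_derivative D) (at p)" and ap: "a < p"
    and m: "\<And>s. a < s \<Longrightarrow> s < p \<Longrightarrow> f p \<le> f s"
  shows "D \<le> 0"
proof -
  have "(f has_real_derivative D) (at p within {..<p})" using d by (rule has_field_derivative_at_within)
  then have lim: "((\<lambda>s. (f s - f p) / (s - p)) \<longlongrightarrow> D) (at_left p)"
    by (simp add: has_field_derivative_iff)
  show ?thesis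
  proof (rule tendsto_upperbound[OF lim])
    show "\<forall>\<^sub>F s in at_left p. (f s - f p) / (s - p) \<le> 0"
      using eventually_at_left_real[OF ap]
    proof eventually_elim
      case (elim s)
      then have "f s - f p \<ge> 0" "s - p < 0" using m[of s] by auto
      then show ?case by (rule divide_nonneg_neg)
    qed
  qed (simp add: trivial_limit_at_left_real)
qed

lemma toolGm:
  fixes w w1 w2 :: "real \<Rightarrow> real" and x1 \<delta> G K :: real
  assumes d1: "\<And>t. t \<ge> x1 \<Longrightarrow> (w has_real_derivative w1 t) (at t)"
    and d2: "\<And>t. t \<ge> x1 \<Longrightarrow> (w1 has_real_derivative w2 t) (at t)"
    and ineq: "\<And>t. t \<ge> x1 \<Longrightarrow> w2 t \<ge> \<delta> + G * w1 t"
    and neg: "\<And>t. t \<ge> x1 \<Longrightarrow> w1 t < 0"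
    and bd: "\<And>t. t \<ge> x1 \<Longrightarrow> \<bar>w t\<bar> \<le> K"
    and G: "G > 0" and \<delta>: "\<delta> > 0"
  shows False
proof -
  have K: "K \<ge> 0" using bd[of x1] by simp
  define T where "T = 2 * K * G / \<delta> + 1"
  have "2 * K * G / \<delta> \<ge> 0" using K G \<delta> by simp
  then have T: "T > 0" "T \<ge> 1" by (simp_all add: T_def)
  obtain \<xi> where \<xi>: "x1 < \<xi>" "\<xi> < x1 + T" "w (x1 + T) - w x1 = (x1 + T - x1) * w1 \<xi>"
    using MVT2[of x1 "x1 + T" w w1] d1 T by auto
  have "T * w1 \<xi> \<ge> - 2 * K" using \<xi>(3) bd[of x1] bd[of "x1 + T"] T by (simp add: abs_le_iff)
  then have "w1 \<xi> \<ge> - 2 * K / T" using T by (simp add: field_simps)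
  moreover have "- 2 * K / T > - \<delta> / G"
  proof -
    have "2 * K * G < \<delta> * T" using \<delta> G by (simp add: T_def field_simps)
    then have "2 * K / T < \<delta> / G" using T G by (simp add: field_simps)
    then show ?thesis by simp
  qed
  ultimately have c: "w1 \<xi> + \<delta> / G > 0" by linarith
  define c where "c = w1 \<xi> + \<delta> / G"
  define \<phi> where "\<phi> s = (w1 s + \<delta> / G) * exp (- G * (s - \<xi>))" for s
  define t where "t = \<xi> + \<delta> / (c * G^2)"
  have ct: "c > 0" using c by (simp add: c_def)
  have t: "\<xi> \<le> t" using ct G \<delta> by (simp add: t_def)
  have "\<phi> \<xi> \<le> \<phi> t"
  proof (rule DERIV_nonneg_imp_nondecreasing[OF t])
    fix s assume s: "\<xi> \<le> s" "s \<le> t"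
    then have sx: "s \<ge> x1" using \<xi> by simp
    have "(\<phi> has_real_derivative (w2 s * exp (- G * (s - \<xi>)) + (w1 s + \<delta> / G) * (exp (- G * (s - \<xi>)) * (- G)))) (at s)"
      unfolding \<phi>_def by (auto intro!: derivative_eq_intros d2[OF sx])
    moreover have "w2 s * exp (- G * (s - \<xi>)) + (w1 s + \<delta> / G) * (exp (- G * (s - \<xi>)) * (- G))
        = (w2 s - G * w1 s - \<delta>) * exp (- G * (s - \<xi>))"
      using G by (simp add: field_simps)
    moreover have "w2 s - G * w1 s - \<delta> \<ge> 0" using ineq[OF sx] by simp
    ultimately show "\<exists>y. (\<phi> has_real_derivative y) (at s) \<and> 0 \<le> y" by fastforce
  qed
  then have "c \<le> (w1 t + \<delta> / G) * exp (- G * (t - \<xi>))" by (simp add: \<phi>_def c_def)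
  then have "c * exp (G * (t - \<xi>)) \<le> (w1 t + \<delta> / G) * exp (- G * (t - \<xi>)) * exp (G * (t - \<xi>))"
    by (rule mult_right_mono) simp
  also have "\<dots> = w1 t + \<delta> / G"
  proof -
    have e: "exp (- G * (t - \<xi>)) * exp (G * (t - \<xi>)) = 1" by (simp add: exp_add[symmetric])
    show ?thesis by (simp only: mult.assoc e mult_1_right)
  qed
  finally have A1: "c * exp (G * (t - \<xi>)) \<le> w1 t + \<delta> / G" .
  have "c * (1 + G * (t - \<xi>)) \<le> c * exp (G * (t - \<xi>))"
    using ct by (intro mult_left_mono exp_ge_add_one_self) simp_all
  moreover have "c * (1 + G * (t - \<xi>)) = c + \<delta> / G"
    using ct G by (simp add: t_def field_simps power2_eq_square)
  ultimately have "w1 t \<ge> c" using A1 by linarith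
  moreover have "w1 t < 0" using neg[of t] t \<xi> by simp
  ultimately show False using ct by simp
qed

lemma toolGp:
  fixes w w1 w2 :: "real \<Rightarrow> real" and x1 \<delta> G K :: real
  assumes d1: "\<And>t. t \<ge> x1 \<Longrightarrow> (w has_real_derivative w1 t) (at t)"
    and d2: "\<And>t. t \<ge> x1 \<Longrightarrow> (w1 has_real_derivative w2 t) (at t)"
    and ineq: "\<And>t. t \<ge> x1 \<Longrightarrow> w2 t \<ge> \<delta> - G * w1 t"
    and st: "w1 x1 > 0"
    and bd: "\<And>t. t \<ge> x1 \<Longrightarrow> \<bar>w t\<bar> \<le> K"
    and G: "G > 0" and \<delta>: "\<delta> > 0"
  shows False
proof -
  have K: "K \<ge> 0" using bd[of x1] by simp
  define m0 where "m0 = min (w1 x1) (\<delta> / G)"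
  have m0: "m0 > 0" using st G \<delta> by (simp add: m0_def)
  have lb: "w1 t \<ge> m0" if t: "x1 \<le> t" for t
  proof -
    define \<psi> where "\<psi> s = (w1 s - \<delta> / G) * exp (G * (s - x1))" for s
    have "\<psi> x1 \<le> \<psi> t"
    proof (rule DERIV_nonneg_imp_nondecreasing[OF t])
      fix s assume s: "x1 \<le> s" "s \<le> t"
      have "(\<psi> has_real_derivative (w2 s * exp (G * (s - x1)) + (w1 s - \<delta> / G) * (exp (G * (s - x1)) * G))) (at s)"
        unfolding \<psi>_def by (auto intro!: derivative_eq_intros d2[OF s(1)])
      moreover have "w2 s * exp (G * (s - x1)) + (w1 s - \<delta> / G) * (exp (G * (s - x1)) * G)
          = (w2 s + G * w1 s - \<delta>) * exp (G * (s - x1))"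
        using G by (simp add: field_simps)
      moreover have "w2 s + G * w1 s - \<delta> \<ge> 0" using ineq[OF s(1)] by simp
      ultimately show "\<exists>y. (\<psi> has_real_derivative y) (at s) \<and> 0 \<le> y" by fastforce
    qed
    then have "w1 x1 - \<delta> / G \<le> (w1 t - \<delta> / G) * exp (G * (t - x1))" by (simp add: \<psi>_def)
    then have "(w1 x1 - \<delta> / G) * exp (- G * (t - x1)) \<le> (w1 t - \<delta> / G) * exp (G * (t - x1)) * exp (- G * (t - x1))"
      by (rule mult_right_mono) simp
    also have "\<dots> = w1 t - \<delta> / G"
    proof -
      have e: "exp (G * (t - x1)) * exp (- G * (t - x1)) = 1" by (simp add: exp_add[symmetric])
      show ?thesis by (simp only: mult.assoc e mult_1_right)
    qed
    finally have A1: "(w1 x1 - \<delta> / G) * exp (- G * (t - x1)) \<le> w1 t - \<delta> / G" .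
    have q: "exp (- G * (t - x1)) \<le> 1" "exp (- G * (t - x1)) > 0" using G t by simp_all
    show ?thesis
    proof (cases "w1 x1 - \<delta> / G \<ge> 0")
      case True
      then have "0 \<le> (w1 x1 - \<delta> / G) * exp (- G * (t - x1))" using q by simp
      then show ?thesis using A1 by (simp add: m0_def)
    next
      case False
      then have "(w1 x1 - \<delta> / G) * 1 \<le> (w1 x1 - \<delta> / G) * exp (- G * (t - x1))"
        using q by (intro mult_left_mono_neg) simp_all
      then show ?thesis using A1 by (simp add: m0_def)
    qed
  qed
  define T where "T = (2 * K + 1) / m0"
  have T: "T > 0" using m0 K by (simp add: T_def)
  obtain \<xi> where \<xi>: "x1 < \<xi>" "\<xi> < x1 + T" "w (x1 + T) - w x1 = (x1 + T - x1) * w1 \<xi>"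
    using MVT2[of x1 "x1 + T" w w1] d1 T by auto
  have "T * w1 \<xi> \<ge> T * m0" using lb[of \<xi>] \<xi> T by (intro mult_left_mono) simp_all
  moreover have "T * m0 = 2 * K + 1" using m0 by (simp add: T_def)
  moreover have "T * w1 \<xi> \<le> 2 * K" using \<xi>(3) bd[of x1] bd[of "x1 + T"] T by (simp add: abs_le_iff)
  ultimately show False by linarith
qed

lemma ratio_limsup:
  fixes w w1 w2 g k :: "real \<Rightarrow> real" and R G \<kappa> K \<epsilon> :: real
  assumes d1: "\<And>x. x \<ge> R \<Longrightarrow> (w has_real_derivative w1 x) (at x)"
    and d2: "\<And>x. x \<ge> R \<Longrightarrow> (w1 has_real_derivative w2 x) (at x)"
    and eq: "\<And>x. x \<ge> R \<Longrightarrow> w2 x + g x * w1 x + k x * w x * (1 - w x) = 0"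
    and kb: "\<And>x. x \<ge> R \<Longrightarrow> k x \<ge> \<kappa>" and \<kappa>: "\<kappa> > 0"
    and gb: "\<And>x. x \<ge> R \<Longrightarrow> \<bar>g x\<bar> \<le> G" and G: "G > 0"
    and bd: "\<And>x. x \<ge> R \<Longrightarrow> \<bar>w x\<bar> \<le> K" and \<epsilon>: "\<epsilon> > 0"
  shows "eventually (\<lambda>x. w x \<le> 1 + \<epsilon>) at_top"
proof -
  have w2eq: "w2 x = k x * (w x * (w x - 1)) - g x * w1 x" if "x \<ge> R" for x
  proof -
    have "k x * w x * (1 - w x) = - (k x * (w x * (w x - 1)))" by (simp add: algebra_simps)
    then show ?thesis using eq[OF that] by linarith
  qed
  have w2pos: "w2 x > 0" if "x \<ge> R" "w x > 1" "w1 x = 0" for x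
  proof -
    have "k x > 0" using kb[OF that(1)] \<kappa> by linarith
    moreover have "w x * (w x - 1) > 0" using that(2) by simp
    ultimately show ?thesis using w2eq[OF that(1)] that(3) by simp
  qed
  have kmono: "k x * (w x * (w x - 1)) \<ge> \<kappa> * (L * (L - 1))" if "x \<ge> R" "w x \<ge> L" "L \<ge> 1" for x L
  proof -
    have "L * (L - 1) \<le> w x * (w x - 1)" using that by (intro mult_mono) simp_all
    moreover have "0 \<le> L * (L - 1)" using that by simp
    ultimately show ?thesis using kb[OF that(1)] \<kappa> by (rule_tac mult_mono) simp_all
  qed
  have A: "\<not> (w x1 > 1 \<and> w1 x1 > 0)" if x1R: "x1 \<ge> R" for x1
  proof
    assume h: "w x1 > 1 \<and> w1 x1 > 0"
    have pos: "w1 t > 0" if tx: "t \<ge> x1" for t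
    proof (rule ccontr)
      assume nt: "\<not> w1 t > 0"
      define T where "T = {x1..t} \<inter> w1 -` {..0}"
      have cw1: "continuous_on {x1..t} w1"
        by (intro continuous_at_imp_continuous_on ballI DERIV_isCont[OF d2]) (use x1R in simp)
      have "closed T" unfolding T_def by (rule continuous_closed_preimage[OF cw1]) simp_all
      moreover have "bounded T" unfolding T_def by (rule bounded_subset[OF compact_imp_bounded[OF compact_Icc[of x1 t]]]) auto
      ultimately have cT: "compact T" by (simp add: compact_eq_bounded_closed)
      have "t \<in> T" using tx nt unfolding T_def by simp
      then have "T \<noteq> {}" by blast
      from compact_attains_inf[OF cT this] obtain t1 where t1: "t1 \<in> T" "\<And>s. s \<in> T \<Longrightarrow> t1 \<le> s"
        by blast
      have t1a: "x1 \<le> t1" "t1 \<le> t" "w1 t1 \<le> 0" using t1(1) unfolding T_def by simp_all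
      have t1x: "x1 < t1" using t1a h by (cases "t1 = x1") simp_all
      have lt: "w1 s > 0" if s: "x1 \<le> s" "s < t1" for s
      proof (rule ccontr)
        assume "\<not> w1 s > 0"
        then have "s \<in> T" using s t1a unfolding T_def by simp
        then have "t1 \<le> s" by (rule t1(2))
        then show False using s by simp
      qed
      have "0 \<le> w1 t1"
      proof (rule tendsto_lowerbound)
        show "(w1 \<longlongrightarrow> w1 t1) (at_left t1)"
          using DERIV_isCont[OF d2[of t1]] t1x x1R by (simp add: isCont_def filterlim_at_split)
        show "\<forall>\<^sub>F s in at_left t1. 0 \<le> w1 s"
          using eventually_at_left_real[OF t1x] by eventually_elim (simp add: lt less_imp_le)
      qed (simp add: trivial_limit_at_left_real)
      then have z: "w1 t1 = 0" using t1a by simp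
      have "w x1 \<le> w t1"
      proof (rule DERIV_nonneg_imp_nondecreasing[OF t1a(1)])
        fix s assume s: "x1 \<le> s" "s \<le> t1"
        have "w1 s \<ge> 0" using lt[of s] z s by (cases "s = t1") simp_all
        then show "\<exists>y. (w has_real_derivative y) (at s) \<and> 0 \<le> y" using d1[of s] s x1R by auto
      qed
      then have "w t1 > 1" using h by simp
      then have p2: "w2 t1 > 0" using w2pos[of t1] z t1x x1R by simp
      have "w2 t1 \<le> 0"
      proof (rule left_min_deriv[OF d2 t1x])
        show "R \<le> t1" using t1x x1R by simp
        show "w1 t1 \<le> w1 s" if "x1 < s" "s < t1" for s using lt[of s] that z by simp
      qed
      then show False using p2 by simp
    qed
    have mono: "w t \<ge> w x1" if tx: "t \<ge> x1" for t
    proof (rule DERIV_nonneg_imp_nondecreasing[OF tx])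
      fix s assume s: "x1 \<le> s" "s \<le> t"
      show "\<exists>y. (w has_real_derivative y) (at s) \<and> 0 \<le> y" using d1[of s] pos[of s] s x1R by (auto intro: less_imp_le)
    qed
    define L where "L = w x1"
    have L: "L > 1" using h by (simp add: L_def)
    show False
    proof (rule toolGp[of x1 w w1 w2 "\<kappa> * (L * (L - 1))" G K])
      show "(w has_real_derivative w1 t) (at t)" if "x1 \<le> t" for t using d1 that x1R by simp
      show "(w1 has_real_derivative w2 t) (at t)" if "x1 \<le> t" for t using d2 that x1R by simp
      show "\<bar>w t\<bar> \<le> K" if "x1 \<le> t" for t using bd that x1R by simp
      show "0 < w1 x1" using h by simp
      show "0 < G" by (rule G)
      show "0 < \<kappa> * (L * (L - 1))" using \<kappa> L by simp
      show "\<kappa> * (L * (L - 1)) - G * w1 t \<le> w2 t" if tx: "x1 \<le> t" for t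
      proof -
        have tR: "t \<ge> R" using tx x1R by simp
        have "k t * (w t * (w t - 1)) \<ge> \<kappa> * (L * (L - 1))"
          using kmono[OF tR, of L] mono[OF tx] L by (simp add: L_def)
        moreover have "g t * w1 t \<le> G * w1 t"
          using gb[OF tR] pos[OF tx] by (intro mult_right_mono) (simp_all add: abs_le_iff)
        ultimately show ?thesis using w2eq[OF tR] by linarith
      qed
    qed
  qed
  have B: "w1 x < 0" if xR: "x \<ge> R" and wx: "w x > 1" for x
  proof (rule ccontr)
    assume "\<not> w1 x < 0"
    moreover have "\<not> w1 x > 0" using A[OF xR] wx by simp
    ultimately have z: "w1 x = 0" by simp
    have "w2 x > 0" using w2pos[OF xR wx z] .
    from DERIV_pos_inc_right[OF d2[OF xR] this] obtain d where d: "d > 0" "\<And>h. h > 0 \<Longrightarrow> h < d \<Longrightarrow> w1 x < w1 (x + h)"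
      by blast
    define h where "h = d / 2"
    have h: "h > 0" "h < d" using d by (simp_all add: h_def)
    have "w x \<le> w (x + h)"
    proof (rule DERIV_nonneg_imp_nondecreasing[of x "x + h"])
      show "x \<le> x + h" using h by simp
      fix s assume s: "x \<le> s" "s \<le> x + h"
      have "w1 s \<ge> 0"
      proof (cases "s = x")
        case True then show ?thesis using z by simp
      next
        case False
        then have "w1 x < w1 (x + (s - x))" using s h by (intro d(2)) simp_all
        then show ?thesis using z by simp
      qed
      then show "\<exists>y. (w has_real_derivative y) (at s) \<and> 0 \<le> y" using d1[of s] s xR by auto
    qed
    moreover have "w1 (x + h) > 0" using d(2)[OF h] z by simp
    ultimately show False using A[of "x + h"] xR wx h by simp
  qed
  have C: False if xy: "R \<le> x" "x < y" "w y > w x" "w y > 1" for x y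
  proof -
    have cw: "continuous_on {x..y} w"
      by (intro continuous_at_imp_continuous_on ballI DERIV_isCont[OF d1]) (use xy in simp)
    have "{x..y} \<noteq> {}" using xy by simp
    from continuous_attains_sup[OF compact_Icc this cw] obtain p where
      p: "p \<in> {x..y}" "\<And>z. z \<in> {x..y} \<Longrightarrow> w z \<le> w p" by blast
    have wp: "w p \<ge> w y" using p(2)[of y] xy by simp
    have px: "x < p" using p(1) wp xy by (cases "p = x") simp_all
    have pR: "p \<ge> R" using px xy by simp
    have "w1 p < 0" using B[OF pR] wp xy by simp
    from DERIV_neg_dec_left[OF d1[OF pR] this] obtain d where d: "d > 0" "\<And>h. h > 0 \<Longrightarrow> h < d \<Longrightarrow> w p < w (p - h)"
      by blast
    define h where "h = min (d / 2) ((p - x) / 2)"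
    have h0: "h > 0" "h < d" "h \<le> (p - x) / 2" using d px unfolding h_def by (simp_all add: min_def)
    then have h: "h > 0" "h < d" "p - h \<in> {x..y}" using px p(1) by auto
    have "w p < w (p - h)" using d(2) h by simp
    moreover have "w (p - h) \<le> w p" using p(2) h by simp
    ultimately show False by simp
  qed
  show ?thesis
  proof (rule ccontr)
    assume "\<not> ?thesis"
    then have fr: "\<exists>x\<ge>N. w x > 1 + \<epsilon>" for N
      unfolding eventually_at_top_linorder by (simp add: not_le)
    obtain x1 where x1: "x1 \<ge> R" "w x1 > 1 + \<epsilon>" using fr[of R] by blast
    have all: "w y > 1 + \<epsilon>" if yx: "y \<ge> x1" for y
    proof (rule ccontr)
      assume ny: "\<not> w y > 1 + \<epsilon>"
      obtain x2 where x2: "x2 \<ge> y + 1" "w x2 > 1 + \<epsilon>" using fr[of "y + 1"] by blast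
      show False by (rule C[of y x2]) (use x1 yx x2 ny \<epsilon> in simp_all)
    qed
    show False
    proof (rule toolGm[of x1 w w1 w2 "\<kappa> * ((1 + \<epsilon>) * \<epsilon>)" G K])
      show "(w has_real_derivative w1 t) (at t)" if "x1 \<le> t" for t using d1 that x1 by simp
      show "(w1 has_real_derivative w2 t) (at t)" if "x1 \<le> t" for t using d2 that x1 by simp
      show "\<bar>w t\<bar> \<le> K" if "x1 \<le> t" for t using bd that x1 by simp
      show "0 < G" by (rule G)
      show "0 < \<kappa> * ((1 + \<epsilon>) * \<epsilon>)" using \<kappa> \<epsilon> by simp
      show neg: "w1 t < 0" if "x1 \<le> t" for t using B[of t] all[OF that] that x1 \<epsilon> by simp
      show "\<kappa> * ((1 + \<epsilon>) * \<epsilon>) + G * w1 t \<le> w2 t" if tx: "x1 \<le> t" for t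
      proof -
        have tR: "t \<ge> R" using tx x1 by simp
        have "k t * (w t * (w t - 1)) \<ge> \<kappa> * ((1 + \<epsilon>) * (1 + \<epsilon> - 1))"
          using kmono[OF tR, of "1 + \<epsilon>"] all[OF tx] \<epsilon> by simp
        then have k1: "k t * (w t * (w t - 1)) \<ge> \<kappa> * ((1 + \<epsilon>) * \<epsilon>)" by simp
        have "\<bar>g t\<bar> * \<bar>w1 t\<bar> \<le> G * \<bar>w1 t\<bar>" using gb[OF tR] by (intro mult_right_mono) simp_all
        moreover have "g t * w1 t \<le> \<bar>g t\<bar> * \<bar>w1 t\<bar>" by (simp add: abs_mult[symmetric])
        moreover have "\<bar>w1 t\<bar> = - w1 t" using neg[OF tx] by simp
        ultimately have "g t * w1 t \<le> - (G * w1 t)" by simp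
        then show ?thesis using w2eq[OF tR] k1 by linarith
      qed
    qed
  qed
qed

lemma ratio_from_sols:
  fixes V V1 V2 W W1 W2 a q :: "real \<Rightarrow> real" and \<beta> Aa CV m Kw R \<epsilon> :: real
  assumes dV: "\<And>x. (V has_real_derivative V1 x) (at x)"
    and dV1: "\<And>x. (V1 has_real_derivative V2 x) (at x)"
    and dW: "\<And>x. (W has_real_derivative W1 x) (at x)"
    and dW1: "\<And>x. (W1 has_real_derivative W2 x) (at x)"
    and eV: "\<And>x. V2 x + a x * V1 x + (q x - \<beta> * V x) * V x = 0"
    and eW: "\<And>x. W2 x + a x * W1 x + (q x - \<beta> * W x) * W x = 0"
    and \<beta>: "\<beta> > 0" and aB: "\<And>x. \<bar>a x\<bar> \<le> Aa" and V1B: "\<And>x. \<bar>V1 x\<bar> \<le> CV"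
    and Vm: "\<And>x. x \<ge> R \<Longrightarrow> V x \<ge> m" and m: "m > 0"
    and Wpos: "\<And>x. x \<ge> R \<Longrightarrow> W x \<ge> 0" and WK: "\<And>x. W x \<le> Kw" and \<epsilon>: "\<epsilon> > 0"
  shows "eventually (\<lambda>x. W x / V x \<le> 1 + \<epsilon>) at_top"
proof -
  have Vnz: "V x \<noteq> 0" if "x \<ge> R" for x using Vm[OF that] m by simp
  have Vp: "V x > 0" if "x \<ge> R" for x using Vm[OF that] m by simp
  have Kw: "Kw \<ge> 0" using Wpos[of R] WK[of R] by simp
  have CV: "CV \<ge> 0" using V1B[of 0] by simp
  have Aa: "Aa \<ge> 0" using aB[of 0] by simp
  define w1 where "w1 x = (W1 x * V x - W x * V1 x) / (V x * V x)" for x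
  define w2 where "w2 x = ((W2 x * V x + V1 x * W1 x - (W1 x * V1 x + V2 x * W x)) * (V x * V x)
      - (W1 x * V x - W x * V1 x) * (V1 x * V x + V1 x * V x)) / ((V x * V x) * (V x * V x))" for x
  define g where "g x = 2 * V1 x / V x + a x" for x
  define k where "k x = \<beta> * V x" for x
  show ?thesis
  proof (rule ratio_limsup[of R "\<lambda>x. W x / V x" w1 w2 g k "\<beta> * m" "2 * CV / m + Aa + 1" "Kw / m" \<epsilon>])
    show "((\<lambda>x. W x / V x) has_real_derivative w1 x) (at x)" if "R \<le> x" for x
      unfolding w1_def by (rule DERIV_divide[OF dW dV Vnz[OF that]])
    show "(w1 has_real_derivative w2 x) (at x)" if "R \<le> x" for x
    proof -
      have "((\<lambda>x. (W1 x * V x - W x * V1 x) / (V x * V x)) has_real_derivative w2 x) (at x)"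
        unfolding w2_def
        by (rule DERIV_divide[OF DERIV_diff[OF DERIV_mult[OF dW1 dV] DERIV_mult[OF dW dV1]] DERIV_mult[OF dV dV]])
           (use Vnz[OF that] in simp)
      moreover have "(\<lambda>x. (W1 x * V x - W x * V1 x) / (V x * V x)) = w1" by (rule ext) (simp add: w1_def)
      ultimately show ?thesis by simp
    qed
    show "w2 x + g x * w1 x + k x * (W x / V x) * (1 - W x / V x) = 0" if "R \<le> x" for x
    proof -
      have v: "V x \<noteq> 0" by (rule Vnz[OF that])
      have V2e: "V2 x = - a x * V1 x - (q x - \<beta> * V x) * V x" using eV[of x] by (simp add: algebra_simps)
      have W2e: "W2 x = - a x * W1 x - (q x - \<beta> * W x) * W x" using eW[of x] by (simp add: algebra_simps)
      show ?thesis unfolding w2_def w1_def g_def k_def V2e W2e using v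
        by (simp add: field_simps)
    qed
    show "\<beta> * m \<le> k x" if "R \<le> x" for x unfolding k_def using Vm[OF that] \<beta> by simp
    show "0 < \<beta> * m" using \<beta> m by simp
    show "\<bar>g x\<bar> \<le> 2 * CV / m + Aa + 1" if "R \<le> x" for x
    proof -
      have "\<bar>V1 x\<bar> / V x \<le> CV / V x" using V1B[of x] Vp[OF that] by (simp add: divide_right_mono)
      also have "\<dots> \<le> CV / m" using Vm[OF that] m CV by (intro divide_left_mono) simp_all
      finally have "\<bar>V1 x / V x\<bar> \<le> CV / m" using Vp[OF that] by simp
      then have "\<bar>2 * V1 x / V x\<bar> \<le> 2 * CV / m" by simp
      then show ?thesis unfolding g_def using aB[of x] by linarith
    qed
    show "0 < 2 * CV / m + Aa + 1"
    proof -
      have "2 * CV / m \<ge> 0" using CV m by simp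
      then show ?thesis using Aa by linarith
    qed
    show "\<bar>W x / V x\<bar> \<le> Kw / m" if "R \<le> x" for x
    proof -
      have "W x / V x \<le> Kw / V x" using WK[of x] Vp[OF that] by (simp add: divide_right_mono)
      also have "\<dots> \<le> Kw / m" using Vm[OF that] m Kw by (intro divide_left_mono) simp_all
      finally show ?thesis using Wpos[OF that] Vp[OF that] by simp
    qed
    show "0 < \<epsilon>" by (rule \<epsilon>)
  qed
qed

theorem lemma3p4:
  fixes chi b \<nu> \<mu> c :: real
    and r :: "real \<Rightarrow> real" and rm rstar :: real
    and r1 x1 \<epsilon> ceps x0 :: real
    and \<phi> :: "real \<Rightarrow> real"
    and u Ulow Ustar :: "real \<Rightarrow> real"
    and U :: "real \<Rightarrow> real \<Rightarrow> real"
  assumes pos: "0 < chi" "0 < b" "0 < \<nu>" "0 < \<mu>"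
    and r_holder: "holder_cont r" and r_bdd: "bounded (range r)"
    and r_lim_top: "(r \<longlongrightarrow> rstar) at_top"
    and r_lim_bot: "(r \<longlongrightarrow> rm) at_bot"
    and r_signs: "rm < 0" "0 < rstar"
    and r_between: "\<And>x. rm \<le> r x \<and> r x \<le> rstar"
    and b_big: "b > 2 * chi * \<mu>"
    and c_big: "c > chi * \<mu> * rstar / (2 * sqrt \<nu> * (b - chi * \<mu>))
                    - 2 * sqrt (rstar * (b - 2 * chi * \<mu>) / (b - chi * \<mu>))"
    \<comment> \<open>choice of r_1, x_1\<close>
    and r1: "rm < r1" "r1 < 0"
    and x1: "\<And>x. x \<le> x1 \<Longrightarrow> r x \<le> r1"
    \<comment> \<open>choice of epsilon and the traveling wave (phi_eps, c~_eps)\<close>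
    and eps: "0 < \<epsilon>" "\<epsilon> < rstar * (b - 2 * chi * \<mu>) / (b - chi * \<mu>)"
    and ceps: "ceps > 2 * sqrt (rstar * (b - 2 * chi * \<mu>) / (b - chi * \<mu>))
        - (c - chi * \<mu> * rstar / (2 * sqrt \<nu> * (b - chi * \<mu>))
             + 2 * sqrt (rstar * (b - 2 * chi * \<mu>) / (b - chi * \<mu>))) / 2"
    and phi_decr: "\<And>x y. x \<le> y \<Longrightarrow> \<phi> y \<le> \<phi> x"
    and phi_ode: "\<exists>\<phi>' \<phi>''. \<forall>x. (\<phi> has_real_derivative \<phi>' x) (at x) \<and>
        (\<phi>' has_real_derivative \<phi>'' x) (at x) \<and>
        \<phi>'' x + ceps * \<phi>' x + f_eps chi b \<mu> rstar \<epsilon> (\<phi> x) = 0"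
    and phi_lim_bot: "(\<phi> \<longlongrightarrow> ((rstar - \<epsilon>) * (b - chi * \<mu>) - chi * \<mu> * rstar) / (b - chi * \<mu>)^2) at_bot"
    and phi_lim_top: "(\<phi> \<longlongrightarrow> - \<epsilon>) at_top"
    \<comment> \<open>psi_eps(x) = phi_eps(-x) (translation absorbed into phi), psi_eps(x_0) = 0\<close>
    and x0: "x0 > x1" "\<phi> (- x0) = 0" "\<And>x. x > x0 \<Longrightarrow> r x \<ge> rstar - \<epsilon>"
    \<comment> \<open>u in E_1\<close>
    and u_E1: "u \<in> Cb_unif"
      "\<And>x. max (\<phi> (- x)) 0 \<le> u x"
      "\<And>x. u x \<le> min (rstar / (b - chi * \<mu>))
             (rstar / (b - chi * \<mu>) * exp ((- c + sqrt (c^2 - 4 * r1)) / 2 * (x - x1)))"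
    \<comment> \<open>U(t,x;u) with initial datum U_1^+ and U_1^*(x;u) its limit as t \<rightarrow> \<infinity>\<close>
    and U_sol: "parabolic_sol chi b \<nu> \<mu> c r u
        (\<lambda>x. min (rstar / (b - chi * \<mu>))
             (rstar / (b - chi * \<mu>) * exp ((- c + sqrt (c^2 - 4 * r1)) / 2 * (x - x1)))) U"
    and U_lim: "\<And>x. ((\<lambda>t. U t x) \<longlongrightarrow> Ustar x) at_top"
    and Ustar_E1: "Ustar \<in> Cb_unif"
      "\<And>x. max (\<phi> (- x)) 0 \<le> Ustar x"
      "\<And>x. Ustar x \<le> min (rstar / (b - chi * \<mu>))
             (rstar / (b - chi * \<mu>) * exp ((- c + sqrt (c^2 - 4 * r1)) / 2 * (x - x1)))"
    and Ustar_sol: "elliptic_sol chi b \<nu> \<mu> c r u Ustar"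
    \<comment> \<open>U_{1*}(.;u) in E_1, another solution of the elliptic equation\<close>
    and Ulow_E1: "Ulow \<in> Cb_unif"
      "\<And>x. max (\<phi> (- x)) 0 \<le> Ulow x"
      "\<And>x. Ulow x \<le> min (rstar / (b - chi * \<mu>))
             (rstar / (b - chi * \<mu>) * exp ((- c + sqrt (c^2 - 4 * r1)) / 2 * (x - x1)))"
    and Ulow_sol: "elliptic_sol chi b \<nu> \<mu> c r u Ulow"
  shows "((\<lambda>x. Ulow x / Ustar x) \<longlongrightarrow> 1) at_top"
proof -
  define \<beta> where "\<beta> = b - chi * \<mu>"
  have \<beta>: "\<beta> > 0" using b_big pos by (simp add: \<beta>_def)
  have cm: "chi * \<mu> > 0" using pos by simp
  from u_E1(1) have "bounded (range u)" "uniformly_continuous_on UNIV u" by (auto simp: Cb_unif_def)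
  then obtain M where M: "\<And>y. \<bar>u y\<bar> \<le> M" and uc: "continuous_on UNIV u"
    unfolding bounded_iff by (auto intro: uniformly_continuous_imp_continuous)
  obtain P' where P': "\<And>x. (Psi \<mu> \<nu> u has_real_derivative P' x) (at x)"
      "\<And>x. \<bar>P' x\<bar> \<le> \<bar>\<mu>\<bar> * M / sqrt \<nu>" "\<And>x. \<bar>Psi \<mu> \<nu> u x\<bar> \<le> \<bar>\<mu>\<bar> * M / \<nu>"
    using psi_props[OF pos(3) uc M, of \<mu>] by blast
  have Px: "Psi_x \<mu> \<nu> u x = P' x" for x unfolding Psi_x_def by (rule DERIV_imp_deriv[OF P'(1)])
  define a where "a x = c - chi * Psi_x \<mu> \<nu> u x" for x
  define q where "q x = r x - chi * \<nu> * Psi \<mu> \<nu> u x" for x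
  define Aa where "Aa = \<bar>c\<bar> + chi * (\<bar>\<mu>\<bar> * M / sqrt \<nu>)"
  define Qb where "Qb = (rstar - rm) + chi * \<nu> * (\<bar>\<mu>\<bar> * M / \<nu>)"
  have aB: "\<bar>a x\<bar> \<le> Aa" for x
  proof -
    have "\<bar>chi * Psi_x \<mu> \<nu> u x\<bar> \<le> chi * (\<bar>\<mu>\<bar> * M / sqrt \<nu>)"
    proof -
      have "chi * \<bar>P' x\<bar> \<le> chi * (\<bar>\<mu>\<bar> * M / sqrt \<nu>)"
        by (rule mult_left_mono[OF P'(2)]) (use pos in simp)
      then show ?thesis unfolding Px abs_mult using pos by simp
    qed
    then show ?thesis unfolding a_def Aa_def by linarith
  qed
  have Aa: "Aa \<ge> 0" using aB[of 0] by simp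
  have qB: "\<bar>q x\<bar> \<le> Qb" for x
  proof -
    have "\<bar>chi * \<nu> * Psi \<mu> \<nu> u x\<bar> \<le> chi * \<nu> * (\<bar>\<mu>\<bar> * M / \<nu>)"
    proof -
      have "(chi * \<nu>) * \<bar>Psi \<mu> \<nu> u x\<bar> \<le> (chi * \<nu>) * (\<bar>\<mu>\<bar> * M / \<nu>)"
        by (rule mult_left_mono[OF P'(3)]) (use pos in simp)
      then show ?thesis unfolding abs_mult using pos by simp
    qed
    moreover have "\<bar>r x\<bar> \<le> rstar - rm" using r_between[of x] r_signs by (simp add: abs_le_iff)
    ultimately show ?thesis unfolding q_def Qb_def by linarith
  qed
  have Qb: "Qb \<ge> 0" using qB[of 0] by simp
  define Kv where "Kv = rstar / (b - chi * \<mu>)"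
  have Kv: "Kv > 0" using \<beta> r_signs by (simp add: Kv_def \<beta>_def[symmetric])
  obtain V1 V2 where V: "\<And>x. (Ustar has_real_derivative V1 x) (at x)" "\<And>x. (V1 has_real_derivative V2 x) (at x)"
      "\<And>x. V2 x + a x * V1 x + (q x - \<beta> * Ustar x) * Ustar x = 0"
    using Ustar_sol unfolding elliptic_sol_def a_def q_def \<beta>_def by blast
  obtain W1 W2 where W: "\<And>x. (Ulow has_real_derivative W1 x) (at x)" "\<And>x. (W1 has_real_derivative W2 x) (at x)"
      "\<And>x. W2 x + a x * W1 x + (q x - \<beta> * Ulow x) * Ulow x = 0"
    using Ulow_sol unfolding elliptic_sol_def a_def q_def \<beta>_def by blast
  have Vb: "0 \<le> Ustar x" "Ustar x \<le> Kv" for x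
    using Ustar_E1(2)[of x] Ustar_E1(3)[of x] by (auto simp: Kv_def)
  have Wb: "0 \<le> Ulow x" "Ulow x \<le> Kv" for x
    using Ulow_E1(2)[of x] Ulow_E1(3)[of x] by (auto simp: Kv_def)
  define B where "B = (Qb + \<beta> * Kv) * Kv"
  have B: "B \<ge> 0" using Qb \<beta> Kv by (simp add: B_def)
  have sec: "\<bar>Z2 x\<bar> \<le> (Aa + 1) * \<bar>Z1 x\<bar> + B"
    if e: "Z2 x + a x * Z1 x + (q x - \<beta> * Z x) * Z x = 0" and zb: "0 \<le> Z x" "Z x \<le> Kv"
    for Z Z1 Z2 :: "real \<Rightarrow> real" and x
  proof -
    have "\<bar>a x * Z1 x\<bar> \<le> Aa * \<bar>Z1 x\<bar>" unfolding abs_mult using aB[of x] by (simp add: mult_right_mono)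
    moreover have "\<bar>q x - \<beta> * Z x\<bar> \<le> Qb + \<beta> * Kv"
    proof -
      have "\<beta> * Z x \<le> \<beta> * Kv" using zb \<beta> by simp
      moreover have "\<beta> * Z x \<ge> 0" using zb \<beta> by simp
      ultimately show ?thesis using qB[of x] by (simp add: abs_le_iff)
    qed
    then have "\<bar>(q x - \<beta> * Z x) * Z x\<bar> \<le> (Qb + \<beta> * Kv) * Kv"
      unfolding abs_mult using zb by (intro mult_mono) simp_all
    moreover have "Z2 x = - (a x * Z1 x) - (q x - \<beta> * Z x) * Z x" using e by simp
    ultimately have "\<bar>Z2 x\<bar> \<le> Aa * \<bar>Z1 x\<bar> + B" unfolding B_def by (simp add: abs_le_iff) 
    then show ?thesis by (simp add: algebra_simps)
  qed
  have V2B: "\<bar>V2 x\<bar> \<le> (Aa + 1) * \<bar>V1 x\<bar> + B" for x by (rule sec[OF V(3) Vb])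
  have W2B: "\<bar>W2 x\<bar> \<le> (Aa + 1) * \<bar>W1 x\<bar> + B" for x by (rule sec[OF W(3) Wb])
  have Vab: "\<bar>Ustar x\<bar> \<le> Kv" for x using Vb[of x] by simp
  have Wab: "\<bar>Ulow x\<bar> \<le> Kv" for x using Wb[of x] by simp
  have A1: "Aa + 1 > 0" using Aa by simp
  have V1B: "\<bar>V1 x\<bar> \<le> (2 * Kv + B / (Aa + 1)) * exp (Aa + 1)" for x
    by (rule deriv_bound[OF V(1) V(2) Vab V2B A1 B])
  have W1B: "\<bar>W1 x\<bar> \<le> (2 * Kv + B / (Aa + 1)) * exp (Aa + 1)" for x
    by (rule deriv_bound[OF W(1) W(2) Wab W2B A1 B])
  define L0 where "L0 = ((rstar - \<epsilon>) * (b - chi * \<mu>) - chi * \<mu> * rstar) / (b - chi * \<mu>)^2"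
  have L0: "L0 > 0"
  proof -
    have "\<epsilon> * (b - chi * \<mu>) < rstar * (b - 2 * chi * \<mu>)"
      using eps(2) \<beta> by (simp add: \<beta>_def field_simps)
    then have "(rstar - \<epsilon>) * (b - chi * \<mu>) - chi * \<mu> * rstar > 0" by (simp add: algebra_simps)
    then show ?thesis unfolding L0_def using \<beta> by (simp add: \<beta>_def)
  qed
  have "((\<lambda>x. \<phi> (- x)) \<longlongrightarrow> L0) at_top"
    unfolding L0_def by (rule filterlim_compose[OF phi_lim_bot filterlim_uminus_at_bot_at_top])
  from order_tendstoD(1)[OF this, of "L0 / 2"] L0
  have "eventually (\<lambda>x. \<phi> (- x) > L0 / 2) at_top" by simp
  then obtain R where R: "\<And>x. x \<ge> R \<Longrightarrow> \<phi> (- x) > L0 / 2" unfolding eventually_at_top_linorder by blast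
  have Vm: "Ustar x \<ge> L0 / 2" if "x \<ge> R" for x using R[OF that] Ustar_E1(2)[of x] by simp
  have Wm: "Ulow x \<ge> L0 / 2" if "x \<ge> R" for x using R[OF that] Ulow_E1(2)[of x] by simp
  have m: "L0 / 2 > 0" using L0 by simp
  have Wp: "0 \<le> Ulow x" if "x \<ge> R" for x by (rule Wb(1))
  have Vp: "0 \<le> Ustar x" if "x \<ge> R" for x by (rule Vb(1))
  have up: "eventually (\<lambda>x. Ulow x / Ustar x \<le> 1 + e) at_top" if "e > 0" for e
    by (rule ratio_from_sols[OF V(1,2) W(1,2) V(3) W(3) \<beta> aB V1B Vm m Wp Wb(2) that])
  have down: "eventually (\<lambda>x. Ustar x / Ulow x \<le> 1 + e) at_top" if "e > 0" for e
    by (rule ratio_from_sols[OF W(1,2) V(1,2) W(3) V(3) \<beta> aB W1B Wm m Vp Vb(2) that])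
  show ?thesis
  proof (rule tendstoI)
    fix e :: real assume e: "e > 0"
    define \<epsilon>' where "\<epsilon>' = min (e / 4) 1"
    have e': "\<epsilon>' > 0" "\<epsilon>' \<le> e / 4" "\<epsilon>' \<le> 1" using e by (simp_all add: \<epsilon>'_def)
    have ev: "eventually (\<lambda>x. Ulow x / Ustar x \<le> 1 + \<epsilon>' \<and> Ustar x / Ulow x \<le> 1 + \<epsilon>' \<and> x \<ge> R) at_top"
      using up[OF e'(1)] down[OF e'(1)] eventually_ge_at_top[of R] by eventually_elim simp
    show "\<forall>\<^sub>F x in at_top. dist (Ulow x / Ustar x) 1 < e"
      using ev
    proof eventually_elim
      case (elim x)
      define t where "t = Ulow x / Ustar x"
      have vp: "Ustar x > 0" "Ulow x > 0" using Vm[of x] Wm[of x] m elim by simp_all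
      have tp: "t > 0" using vp by (simp add: t_def)
      have t1: "t \<le> 1 + \<epsilon>'" using elim by (simp add: t_def)
      have "Ustar x / Ulow x = 1 / t" by (simp add: t_def)
      then have "1 / t \<le> 1 + \<epsilon>'" using elim by simp
      then have "1 \<le> (1 + \<epsilon>') * t" using tp by (simp add: field_simps)
      then have "1 - t \<le> \<epsilon>' * t" by (simp add: algebra_simps)
      also have "\<dots> \<le> \<epsilon>' * (1 + \<epsilon>')" using t1 e' by (intro mult_left_mono) simp_all
      also have "\<dots> \<le> \<epsilon>' * 2" using e' by (intro mult_left_mono) simp_all
      finally have "1 - t \<le> \<epsilon>' * 2" .
      then have "\<bar>t - 1\<bar> < e" using t1 e' e by (simp add: abs_le_iff abs_less_iff)
      then show ?case by (simp add: dist_real_def t_def)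
    qed
  qed
qed

end
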